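(* Consider $\mathrm{CC}(N_{11},N_{10},N_{01},N_{00})=\frac{N_{11}N_{00}-N_{10}N_{01}}{\sqrt{(N_{11}+N_{10})(N_{11}+N_{01})(N_{00}+N_{10})(N_{00}+N_{01})}}$ on nonnegative real arguments for which all four factors under the square root are positive. If $N_{10}+N_{01}>0$, then $\mathrm{CC}$ is strictly increasing in $N_{11}$ (other arguments fixed) and strictly increasing in $N_{00}$ (other arguments fixed). If $N_{11}+N_{00}>0$, then $\mathrm{CC}$ is strictly decreasing in $N_{10}$ and strictly decreasing in $N_{01}$. The same monotonicity holds for $\mathrm{CD}=\frac1\pi\arccos\mathrm{CC}$ with all directions reversed.
   Context: $N_{11},N_{10},N_{01},N_{00}$ play the role of pair-counts of two clusterings: numbers of element pairs that are together in both clusterings, in the first only, in the second only, and in neither. *)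

theory Defs
  imports Complex_Main
begin

definition CC :: "real \<Rightarrow> real \<Rightarrow> real \<Rightarrow> real \<Rightarrow> real" where
  "CC n11 n10 n01 n00 = (n11 * n00 - n10 * n01) /
     sqrt ((n11 + n10) * (n11 + n01) * (n00 + n10) * (n00 + n01))"

definition CD :: "real \<Rightarrow> real \<Rightarrow> real \<Rightarrow> real \<Rightarrow> real" where
  "CD n11 n10 n01 n00 = arccos (CC n11 n10 n01 n00) / pi"

definition admissible :: "real \<Rightarrow> real \<Rightarrow> real \<Rightarrow> real \<Rightarrow> bool" where
  "admissible n11 n10 n01 n00 \<longleftrightarrow>
     n11 \<ge> 0 \<and> n10 \<ge> 0 \<and> n01 \<ge> 0 \<and> n00 \<ge> 0 \<and>
     n11 + n10 > 0 \<and> n11 + n01 > 0 \<and> n00 + n10 > 0 \<and> n00 + n01 > 0"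

end

theory Submission
  imports Defs
begin

lemma g_deriv:
  fixes p q d x :: real
  assumes "x + p > 0" "x + q > 0"
  shows "((\<lambda>x. (x*d - p*q) / sqrt ((x+p)*(x+q))) has_real_derivative
     (d*(x+p)*(x+q) - (x*d-p*q)*(2*x+p+q)/2) / (((x+p)*(x+q)) * sqrt ((x+p)*(x+q)))) (at x)"
proof -
  have P: "(x+p)*(x+q) > 0" using assms by simp
  have S: "sqrt ((x+p)*(x+q)) > 0" using P by simp
  have "((\<lambda>x. (x*d - p*q) / sqrt ((x+p)*(x+q))) has_real_derivative
     (d * sqrt ((x+p)*(x+q)) - (x*d-p*q) * (inverse (sqrt ((x+p)*(x+q))) / 2 * ((x+q) + (x+p)))) / (sqrt ((x+p)*(x+q)))^2) (at x)"
    using P S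
    by (auto intro!: derivative_eq_intros simp: field_simps)
  moreover have "(d * sqrt ((x+p)*(x+q)) - (x*d-p*q) * (inverse (sqrt ((x+p)*(x+q))) / 2 * ((x+q) + (x+p)))) / (sqrt ((x+p)*(x+q)))^2
     = (d*(x+p)*(x+q) - (x*d-p*q)*(2*x+p+q)/2) / (((x+p)*(x+q)) * sqrt ((x+p)*(x+q)))"
    using P S by (simp add: field_simps)
  ultimately show ?thesis by simp
qed

lemma g_mono:
  fixes p q d a b :: real
  assumes "p \<ge> 0" "q \<ge> 0" "d \<ge> 0" "a \<ge> 0" "a < b" "p + q > 0"
    "a + p > 0" "a + q > 0" "d + p > 0" "d + q > 0"
  shows "(a*d - p*q) / sqrt ((a+p)*(a+q)) < (b*d - p*q) / sqrt ((b+p)*(b+q))"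
proof (rule DERIV_pos_imp_increasing_open[OF assms(5)])
  fix x assume x: "a < x" "x < b"
  have xp: "x+p > 0" "x+q>0" using x assms by auto
  have num: "d*(x+p)*(x+q) - (x*d-p*q)*(2*x+p+q)/2 > 0"
  proof -
    have e: "2*(d*(x+p)*(x+q) - (x*d-p*q)*(2*x+p+q)/2) = d*x*(p+q) + 2*d*p*q + 2*x*p*q + p*q*(p+q)"
      by (simp add: field_simps)
    have x0: "x > 0" using x assms by auto
    have "d*x*(p+q) + 2*d*p*q + 2*x*p*q + p*q*(p+q) > 0"
    proof (cases "d > 0")
      case True
      then have "d*x*(p+q) > 0" using x0 assms by simp
      moreover have "2*d*p*q \<ge> 0" "2*x*p*q \<ge> 0" "p*q*(p+q) \<ge> 0" using assms x0 by auto
      ultimately show ?thesis by linarith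
    next
      case False
      then have "p > 0" "q > 0" using assms by auto
      then have "2*x*p*q > 0" using x0 by simp
      moreover have "d*x*(p+q) \<ge> 0" "2*d*p*q \<ge> 0" "p*q*(p+q) \<ge> 0" using assms x0 by auto
      ultimately show ?thesis by linarith
    qed
    then have "0 < 2*(d*(x+p)*(x+q) - (x*d-p*q)*(2*x+p+q)/2)" using e by simp
    then show ?thesis by simp
  qed
  have den: "((x+p)*(x+q)) * sqrt ((x+p)*(x+q)) > 0" using xp by simp
  show "\<exists>y. ((\<lambda>x. (x*d - p*q) / sqrt ((x+p)*(x+q))) has_real_derivative y) (at x) \<and> y > 0"
    using g_deriv[OF xp, of d] num den divide_pos_pos by blast
next
  have "\<forall>x\<in>{a..b}. sqrt ((x+p)*(x+q)) \<noteq> 0" using assms by auto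
  then show "continuous_on {a..b} (\<lambda>x. (x*d - p*q) / sqrt ((x+p)*(x+q)))"
    by (intro continuous_intros) auto
qed

lemma CC_mono1:
  assumes "n10 + n01 > 0" "admissible a n10 n01 n00" "admissible b n10 n01 n00" "a < b"
  shows "CC a n10 n01 n00 < CC b n10 n01 n00"
proof -
  have ad: "n10 \<ge> 0" "n01 \<ge> 0" "n00 \<ge> 0" "a \<ge> 0" "a + n10 > 0" "a + n01 > 0"
    "n00 + n10 > 0" "n00 + n01 > 0"
    using assms unfolding admissible_def by auto
  have "\<And>x. CC x n10 n01 n00 = ((x*n00 - n10*n01) / sqrt ((x+n10)*(x+n01))) / sqrt ((n00+n10)*(n00+n01))"
    unfolding CC_def by (simp add: real_sqrt_mult mult.assoc flip: divide_divide_eq_left)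
  moreover have "sqrt ((n00+n10)*(n00+n01)) > 0" using ad by simp
  moreover have "(a*n00 - n10*n01) / sqrt ((a+n10)*(a+n01)) < (b*n00 - n10*n01) / sqrt ((b+n10)*(b+n01))"
    using g_mono[of n10 n01 n00 a b] ad assms by auto
  ultimately show ?thesis by (metis divide_strict_right_mono)
qed

lemma CC_bound:
  assumes "admissible n11 n10 n01 n00"
  shows "\<bar>CC n11 n10 n01 n00\<bar> \<le> 1"
proof -
  have ad: "n11 \<ge> 0" "n10 \<ge> 0" "n01 \<ge> 0" "n00 \<ge> 0" "n11 + n10 > 0" "n11 + n01 > 0"
    "n00 + n10 > 0" "n00 + n01 > 0"
    using assms unfolding admissible_def by auto
  define x where "x = n11*n00" define y where "y = n10*n01"
  have x0: "x \<ge> 0" "y \<ge> 0" using ad x_def y_def by auto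
  have A: "(n11+n10)*(n00+n01) \<ge> x + y"
    unfolding x_def y_def using ad by (simp add: algebra_simps)
  have B: "(n11+n01)*(n00+n10) \<ge> x + y"
    unfolding x_def y_def using ad by (simp add: algebra_simps)
  have "(x+y)*(x+y) \<le> ((n11+n10)*(n00+n01)) * ((n11+n01)*(n00+n10))"
    using A B x0 by (intro mult_mono) auto
  moreover have "(x-y)^2 \<le> (x+y)*(x+y)" using x0 by (simp add: power2_eq_square algebra_simps)
  ultimately have R: "(x-y)^2 \<le> (n11+n10)*(n11+n01)*(n00+n10)*(n00+n01)"
    by (simp add: algebra_simps)
  have D: "(n11+n10)*(n11+n01)*(n00+n10)*(n00+n01) > 0" using ad by simp
  have "\<bar>x - y\<bar> \<le> sqrt ((n11+n10)*(n11+n01)*(n00+n10)*(n00+n01))"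
    using real_sqrt_le_mono[OF R] by simp
  then show ?thesis unfolding CC_def x_def y_def using D
    by (simp add: abs_div divide_le_eq_1)
qed

lemma CD_mono:
  assumes "admissible a1 a2 a3 a4" "admissible b1 b2 b3 b4"
    "CC a1 a2 a3 a4 < CC b1 b2 b3 b4"
  shows "CD a1 a2 a3 a4 > CD b1 b2 b3 b4"
proof -
  have "arccos (CC b1 b2 b3 b4) < arccos (CC a1 a2 a3 a4)"
    using CC_bound[OF assms(1)] CC_bound[OF assms(2)] assms(3)
    by (intro arccos_less_arccos) auto
  then show ?thesis unfolding CD_def by (simp add: divide_strict_right_mono)
qed

lemma CC_swap: "CC a n10 n01 n00 = CC n00 n10 n01 a"
  unfolding CC_def by (simp add: ac_simps)
lemma adm_swap: "admissible a n10 n01 n00 = admissible n00 n10 n01 a"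
  unfolding admissible_def by auto
lemma CC_neg: "CC n11 n10 n01 n00 = - CC n10 n11 n00 n01"
  unfolding CC_def by (simp add: ac_simps minus_divide_left)
lemma adm_neg: "admissible n11 n10 n01 n00 = admissible n10 n11 n00 n01"
  unfolding admissible_def by auto
lemma CC_neg2: "CC n11 n10 n01 n00 = - CC n01 n00 n11 n10"
  unfolding CC_def by (simp add: ac_simps minus_divide_left)
lemma adm_neg2: "admissible n11 n10 n01 n00 = admissible n01 n00 n11 n10"
  unfolding admissible_def by auto

theorem mainTheorem9:
  shows
  "(\<forall>n10 n01 n00 a b. n10 + n01 > 0 \<and> admissible a n10 n01 n00 \<and> admissible b n10 n01 n00 \<and> a < b
      \<longrightarrow> CC a n10 n01 n00 < CC b n10 n01 n00 \<and> CD a n10 n01 n00 > CD b n10 n01 n00) \<and>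
   (\<forall>n11 n10 n01 a b. n10 + n01 > 0 \<and> admissible n11 n10 n01 a \<and> admissible n11 n10 n01 b \<and> a < b
      \<longrightarrow> CC n11 n10 n01 a < CC n11 n10 n01 b \<and> CD n11 n10 n01 a > CD n11 n10 n01 b) \<and>
   (\<forall>n11 n01 n00 a b. n11 + n00 > 0 \<and> admissible n11 a n01 n00 \<and> admissible n11 b n01 n00 \<and> a < b
      \<longrightarrow> CC n11 a n01 n00 > CC n11 b n01 n00 \<and> CD n11 a n01 n00 < CD n11 b n01 n00) \<and>
   (\<forall>n11 n10 n00 a b. n11 + n00 > 0 \<and> admissible n11 n10 a n00 \<and> admissible n11 n10 b n00 \<and> a < b
      \<longrightarrow> CC n11 n10 a n00 > CC n11 n10 b n00 \<and> CD n11 n10 a n00 < CD n11 n10 b n00)"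
proof (intro conjI allI impI)
  fix n10 n01 n00 a b :: real
  assume h: "n10 + n01 > 0 \<and> admissible a n10 n01 n00 \<and> admissible b n10 n01 n00 \<and> a < b"
  then show c: "CC a n10 n01 n00 < CC b n10 n01 n00" using CC_mono1 by blast
  show "CD a n10 n01 n00 > CD b n10 n01 n00" using CD_mono h c by blast
next
  fix n11 n10 n01 a b :: real
  assume h: "n10 + n01 > 0 \<and> admissible n11 n10 n01 a \<and> admissible n11 n10 n01 b \<and> a < b"
  then show c: "CC n11 n10 n01 a < CC n11 n10 n01 b"
    using CC_mono1[of n10 n01 a n11 b] by (simp add: CC_swap[of _ n10 n01 n11] adm_swap[of _ n10 n01 n11])
  show "CD n11 n10 n01 a > CD n11 n10 n01 b" using CD_mono h c by blast
next
  fix n11 n01 n00 a b :: real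
  assume h: "n11 + n00 > 0 \<and> admissible n11 a n01 n00 \<and> admissible n11 b n01 n00 \<and> a < b"
  then show c: "CC n11 a n01 n00 > CC n11 b n01 n00"
    using CC_mono1[of n11 n00 a n01 b] by (simp add: CC_neg[of n11 _ n01 n00] adm_neg[of n11 _ n01 n00])
  show "CD n11 a n01 n00 < CD n11 b n01 n00" using CD_mono h c by blast
next
  fix n11 n10 n00 a b :: real
  assume h: "n11 + n00 > 0 \<and> admissible n11 n10 a n00 \<and> admissible n11 n10 b n00 \<and> a < b"
  then show c: "CC n11 n10 a n00 > CC n11 n10 b n00"
    using CC_mono1[of n00 n11 a n10 b] by (simp add: CC_neg2[of n11 n10 _ n00] adm_neg2[of n11 n10 _ n00] add.commute)
  show "CD n11 n10 a n00 < CD n11 n10 b n00" using CD_mono h c by blast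
qed

end
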